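(* For every $T>0$, $$\sup_{t\in[0,T]}\Bigl|\int_0^t Y^N(s)\,\widetilde Z^N(s)\,ds\Bigr|\to0$$ in probability as $N\to\infty$.
   Context: Model. Fix $\tau>0$, $\mu\ge 0$, $N\in\mathbb N$, and write $L=\lfloor \tau N\rfloor$. The state space is $\Omega_N=[0,\infty)^{L+1}$, with elements $x=(x_{-L},\dots,x_0)$. Define $\theta_N^\pm:\Omega_N\to\Omega_N$ by $(\theta_N^\pm x)_j=x_{j+1}$ for $-L\le j<0$, $(\theta_N^+x)_0=x_0(1+\frac1N)$, $(\theta_N^-x)_0=\max\{x_0(1-\frac{x_{-L}}{N^2}),0\}$. Let $\xi^N=(\xi^N(n))_{n\ge0}$ be the discrete-time Markov chain on $\Omega_N$ moving from $x$ to $\theta_N^+x$ or $\theta_N^-x$ with probability $1/2$ each, with $\xi^N_j(0)=\mu N$ for all $j$. Let $(\sigma_n)_{n\ge1}$ be i.i.d. Exp(1), independent of $\xi^N$, $J_0=0$, $J_n=\sigma_1+\dots+\sigma_n$, and $X^N(t)=\xi^N(n)$ for $t\in[J_n,J_{n+1})$. For $t\ge0$: $Y^N(t)=X^N_0(Nt)/N$, $Z^N(t)=X^N_{-L}(Nt)/N$, $\widetilde Z^N(t)=Z^N(t)-\min\{Z^N(t),N\}$. *)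

theory Defs
  imports "HOL-Probability.Probability"
begin

text \<open>States x = (x_{-L},...,x_0) are represented as functions int => real,
  meaningful on indices -L..0 (other indices are kept at 0).\<close>

definition Lag :: "real \<Rightarrow> nat \<Rightarrow> nat" where
  "Lag \<tau> N = nat \<lfloor>\<tau> * real N\<rfloor>"

definition theta_plus :: "real \<Rightarrow> nat \<Rightarrow> (int \<Rightarrow> real) \<Rightarrow> (int \<Rightarrow> real)" where
  "theta_plus \<tau> N x = (\<lambda>j. if - int (Lag \<tau> N) \<le> j \<and> j < 0 then x (j + 1)
      else if j = 0 then x 0 * (1 + 1 / real N) else 0)"

definition theta_minus :: "real \<Rightarrow> nat \<Rightarrow> (int \<Rightarrow> real) \<Rightarrow> (int \<Rightarrow> real)" where
  "theta_minus \<tau> N x = (\<lambda>j. if - int (Lag \<tau> N) \<le> j \<and> j < 0 then x (j + 1)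
      else if j = 0 then max (x 0 * (1 - x (- int (Lag \<tau> N)) / (real N)^2)) 0 else 0)"

text \<open>Canonical probability space: coin flips (b n) deciding the n-th step of the chain,
  and i.i.d. Exp(1) holding times (s k) = sigma_{k+1}, all independent.\<close>

definition model_space :: "((nat \<Rightarrow> bool) \<times> (nat \<Rightarrow> real)) measure" where
  "model_space =
     (\<Pi>\<^sub>M n\<in>UNIV. measure_pmf (bernoulli_pmf (1/2))) \<Otimes>\<^sub>M
     (\<Pi>\<^sub>M k\<in>UNIV. density lborel (exponential_density 1))"

primrec xi :: "real \<Rightarrow> real \<Rightarrow> nat \<Rightarrow> (nat \<Rightarrow> bool) \<times> (nat \<Rightarrow> real) \<Rightarrow> nat \<Rightarrow> (int \<Rightarrow> real)" where
  "xi \<tau> \<mu> N \<omega> 0 = (\<lambda>j. if - int (Lag \<tau> N) \<le> j \<and> j \<le> 0 then \<mu> * real N else 0)"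
| "xi \<tau> \<mu> N \<omega> (Suc n) =
     (if fst \<omega> n then theta_plus \<tau> N (xi \<tau> \<mu> N \<omega> n) else theta_minus \<tau> N (xi \<tau> \<mu> N \<omega> n))"

definition jump_time :: "(nat \<Rightarrow> bool) \<times> (nat \<Rightarrow> real) \<Rightarrow> nat \<Rightarrow> real" where
  "jump_time \<omega> n = (\<Sum>k<n. snd \<omega> k)"

definition Xc :: "real \<Rightarrow> real \<Rightarrow> nat \<Rightarrow> (nat \<Rightarrow> bool) \<times> (nat \<Rightarrow> real) \<Rightarrow> real \<Rightarrow> (int \<Rightarrow> real)" where
  "Xc \<tau> \<mu> N \<omega> t =
     xi \<tau> \<mu> N \<omega> (THE n. jump_time \<omega> n \<le> t \<and> t < jump_time \<omega> (Suc n))"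

definition Yp :: "real \<Rightarrow> real \<Rightarrow> nat \<Rightarrow> (nat \<Rightarrow> bool) \<times> (nat \<Rightarrow> real) \<Rightarrow> real \<Rightarrow> real" where
  "Yp \<tau> \<mu> N \<omega> t = Xc \<tau> \<mu> N \<omega> (real N * t) 0 / real N"

definition Zp :: "real \<Rightarrow> real \<Rightarrow> nat \<Rightarrow> (nat \<Rightarrow> bool) \<times> (nat \<Rightarrow> real) \<Rightarrow> real \<Rightarrow> real" where
  "Zp \<tau> \<mu> N \<omega> t = Xc \<tau> \<mu> N \<omega> (real N * t) (- int (Lag \<tau> N)) / real N"

definition Ztilde :: "real \<Rightarrow> real \<Rightarrow> nat \<Rightarrow> (nat \<Rightarrow> bool) \<times> (nat \<Rightarrow> real) \<Rightarrow> real \<Rightarrow> real" where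
  "Ztilde \<tau> \<mu> N \<omega> t = Zp \<tau> \<mu> N \<omega> t - min (Zp \<tau> \<mu> N \<omega> t) (real N)"

end

theory Submission
  imports Defs
begin


lemma xi_bound:
  assumes "\<mu> \<ge> 0" "N > 0"
  shows "0 \<le> xi \<tau> \<mu> N \<omega> n j \<and> xi \<tau> \<mu> N \<omega> n j \<le> \<mu> * real N * (1 + 1 / real N) ^ n"
proof (induction n arbitrary: j)
  case 0
  then show ?case using assms by auto
next
  case (Suc n)
  let ?x = "xi \<tau> \<mu> N \<omega> n"
  let ?B = "\<mu> * real N * (1 + 1 / real N) ^ n"
  have B00: "0 \<le> ?B" using assms by simp
  have B0: "?B \<le> ?B * (1 + 1 / real N)" using B00 assms by (simp add: algebra_simps)
  have x0: "0 \<le> ?x 0" "?x 0 \<le> ?B" using Suc.IH by auto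
  have xL: "0 \<le> ?x (- int (Lag \<tau> N))" using Suc.IH by auto
  have "?x 0 * (1 - ?x (- int (Lag \<tau> N)) / (real N)^2) \<le> ?x 0"
    using x0 xL by (simp add: algebra_simps mult_nonneg_nonneg divide_nonneg_nonneg)
  hence m: "max (?x 0 * (1 - ?x (- int (Lag \<tau> N)) / (real N)^2)) 0 \<le> ?B"
    using x0 by linarith
  have p: "?x 0 * (1 + 1 / real N) \<le> ?B * (1 + 1 / real N)"
    using x0 by (intro mult_right_mono) auto
  define Bs where "Bs = \<mu> * real N * (1 + 1 / real N) ^ Suc n"
  have Bs: "?B * (1 + 1 / real N) = Bs" unfolding Bs_def by simp
  have Bs0: "0 \<le> Bs" "?B \<le> Bs" using B00 B0 Bs by auto
  have P: "0 \<le> theta_plus \<tau> N ?x j \<and> theta_plus \<tau> N ?x j \<le> Bs"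
    using Suc.IH[of "j+1"] Bs0 x0 p Bs assms unfolding theta_plus_def by auto
  have M: "0 \<le> theta_minus \<tau> N ?x j \<and> theta_minus \<tau> N ?x j \<le> Bs"
    using Suc.IH[of "j+1"] Bs0 x0 m unfolding theta_minus_def by auto
  show ?case using P M unfolding Bs_def by simp
qed

lemma jt_exists:
  assumes "\<And>k. snd \<omega> k \<ge> 0" "0 \<le> t" "t < jump_time \<omega> m"
  shows "\<exists>n<m. jump_time \<omega> n \<le> t \<and> t < jump_time \<omega> (Suc n)"
  using assms(3)
proof (induction m)
  case 0
  then show ?case using assms(2) by (simp add: jump_time_def)
next
  case (Suc m)
  then show ?case
    by (cases "t < jump_time \<omega> m") (auto simp: not_less intro: less_SucI)
qed

lemma jt_mono:
  assumes "\<And>k. snd \<omega> k \<ge> 0" "a \<le> b"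
  shows "jump_time \<omega> a \<le> jump_time \<omega> b"
proof -
  have "incseq (jump_time \<omega>)"
    by (rule incseq_SucI) (simp add: jump_time_def assms(1))
  thus ?thesis using assms(2) by (simp add: incseq_def)
qed

lemma jt_the:
  assumes "\<And>k. snd \<omega> k \<ge> 0" "0 \<le> t" "t < jump_time \<omega> m"
  shows "(THE n. jump_time \<omega> n \<le> t \<and> t < jump_time \<omega> (Suc n)) < m"
proof -
  obtain n where n: "n < m" "jump_time \<omega> n \<le> t \<and> t < jump_time \<omega> (Suc n)"
    using jt_exists[OF assms] by blast
  have u: "n' = n" if "jump_time \<omega> n' \<le> t \<and> t < jump_time \<omega> (Suc n')" for n'
  proof (rule ccontr)
    assume "n' \<noteq> n"
    then consider "Suc n' \<le> n" | "Suc n \<le> n'" by linarith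
    then show False
    proof cases
      case 1 then show False using jt_mono[OF assms(1) 1] n that by linarith
    next
      case 2 then show False using jt_mono[OF assms(1) 2] n that by linarith
    qed
  qed
  have "(THE n. jump_time \<omega> n \<le> t \<and> t < jump_time \<omega> (Suc n)) = n"
    by (rule the1_equality) (use n u in blast)+
  with n show ?thesis by simp
qed



lemma exp_half: "(\<integral>\<^sup>+x. ennreal (exp (- x)) \<partial>density lborel (exponential_density 1)) = ennreal (1/2)"
proof -
  have "(\<integral>\<^sup>+x. ennreal (exp (- x)) \<partial>density lborel (exponential_density 1))
      = (\<integral>\<^sup>+x. ennreal (exponential_density 1 x) * ennreal (exp (- x)) \<partial>lborel)"
    by (subst nn_integral_density) auto
  also have "\<dots> = (\<integral>\<^sup>+x. ennreal (exponential_density 2 x) * ennreal (1/2) \<partial>lborel)"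
  proof (rule nn_integral_cong)
    fix x :: real
    have "exponential_density 1 x * exp (- x) = exponential_density 2 x * (1/2)"
      by (auto simp: exponential_density_def exp_add[symmetric])
    then show "ennreal (exponential_density 1 x) * ennreal (exp (- x)) = ennreal (exponential_density 2 x) * ennreal (1/2)"
      by (metis ennreal_mult exponential_density_nonneg exp_ge_zero zero_less_one zero_less_numeral
           divide_nonneg_nonneg zero_le_one zero_le_numeral)
  qed
  also have "\<dots> = (\<integral>\<^sup>+x. ennreal (exponential_density 2 x) \<partial>lborel) * ennreal (1/2)"
    by (rule nn_integral_multc) auto
  also have "(\<integral>\<^sup>+x. ennreal (exponential_density 2 x) \<partial>lborel) = emeasure (density lborel (exponential_density 2)) UNIV"
    by (simp add: emeasure_density)
  also have "\<dots> = 1"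
    using prob_space.emeasure_space_1[OF prob_space_exponential_density[of 2]] by simp
  finally show ?thesis by simp
qed

lemma pps: "product_prob_space (\<lambda>k::nat. density lborel (exponential_density 1))"
  by (simp add: product_prob_space_def product_prob_space_axioms_def product_sigma_finite_def
      prob_space_exponential_density prob_space_imp_sigma_finite)

lemma chernoff:
  "emeasure (\<Pi>\<^sub>M k\<in>(UNIV::nat set). density lborel (exponential_density 1))
     {\<sigma>\<in>space (\<Pi>\<^sub>M k\<in>(UNIV::nat set). density lborel (exponential_density 1)). (\<Sum>k<m. \<sigma> k) \<le> a}
   \<le> ennreal (exp a * (1/2)^m)"
proof -
  let ?E = "\<lambda>k::nat. density lborel (exponential_density 1)"
  let ?S = "\<Pi>\<^sub>M k\<in>(UNIV::nat set). ?E k"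
  interpret P: product_prob_space ?E "UNIV :: nat set" by (rule pps)
  define A where "A = {\<sigma>\<in>space ?S. (\<Sum>k<m. \<sigma> k) \<le> a}"
  have Am: "A \<in> sets ?S" unfolding A_def by measurable
  let ?f = "\<lambda>y. \<Prod>k\<in>{..<m}. ennreal (exp (- y k))"
  have "emeasure ?S A = (\<integral>\<^sup>+\<sigma>. indicator A \<sigma> \<partial>?S)"
    using Am by simp
  also have "\<dots> \<le> (\<integral>\<^sup>+\<sigma>. ennreal (exp a) * ?f \<sigma> \<partial>?S)"
  proof (rule nn_integral_mono)
    fix \<sigma> assume "\<sigma> \<in> space ?S"
    have r: "exp (a - (\<Sum>k<m. \<sigma> k)) = exp a * (\<Prod>k<m. exp (- \<sigma> k))"
    proof -
      have "exp (a - (\<Sum>k<m. \<sigma> k)) = exp (a + (\<Sum>k<m. - \<sigma> k))" by (simp add: sum_negf)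
      also have "\<dots> = exp a * exp (\<Sum>k<m. - \<sigma> k)" by (rule exp_add)
      also have "exp (\<Sum>k<m. - \<sigma> k) = (\<Prod>k<m. exp (- \<sigma> k))" by (rule exp_sum) simp
      finally show ?thesis .
    qed
    have e: "ennreal (exp a) * ?f \<sigma> = ennreal (exp (a - (\<Sum>k<m. \<sigma> k)))"
      unfolding r by (subst prod_ennreal) (auto simp: ennreal_mult prod_nonneg)
    show "indicator A \<sigma> \<le> ennreal (exp a) * ?f \<sigma>"
      unfolding e by (auto simp: indicator_def A_def)
  qed
  also have "\<dots> = ennreal (exp a) * (\<integral>\<^sup>+\<sigma>. ?f \<sigma> \<partial>?S)"
    by (rule nn_integral_cmult) measurable
  also have "(\<integral>\<^sup>+\<sigma>. ?f \<sigma> \<partial>?S) = (\<integral>\<^sup>+\<sigma>. ?f (restrict \<sigma> {..<m}) \<partial>?S)"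
    by (rule nn_integral_cong) simp
  also have "\<dots> = (\<integral>\<^sup>+y. ?f y \<partial>distr ?S (\<Pi>\<^sub>M k\<in>{..<m}. ?E k) (\<lambda>x. restrict x {..<m}))"
    by (rule nn_integral_distr[symmetric]) measurable
  also have "distr ?S (\<Pi>\<^sub>M k\<in>{..<m}. ?E k) (\<lambda>x. restrict x {..<m}) = (\<Pi>\<^sub>M k\<in>{..<m}. ?E k)"
    by (rule P.distr_PiM_restrict_finite) auto
  also have "(\<integral>\<^sup>+y. ?f y \<partial>(\<Pi>\<^sub>M k\<in>{..<m}. ?E k)) = (\<Prod>k\<in>{..<m}. \<integral>\<^sup>+x. ennreal (exp (- x)) \<partial>?E k)"
    by (rule P.product_nn_integral_prod) auto
  also have "\<dots> = ennreal ((1/2)^m)"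
    by (simp only: exp_half prod_constant card_lessThan ennreal_power[symmetric] zero_le_divide_iff zero_le_one zero_le_numeral simp_thms)
  finally show ?thesis unfolding A_def by (simp add: ennreal_mult'[symmetric])
qed



lemma neg_null:
  "emeasure (\<Pi>\<^sub>M k\<in>(UNIV::nat set). density lborel (exponential_density 1))
     {\<sigma>\<in>space (\<Pi>\<^sub>M k\<in>(UNIV::nat set). density lborel (exponential_density 1)). \<exists>i. \<sigma> i < 0} = 0"
proof -
  let ?E = "\<lambda>k::nat. density lborel (exponential_density 1)"
  let ?S = "\<Pi>\<^sub>M k\<in>(UNIV::nat set). ?E k"
  interpret P: product_prob_space ?E "UNIV :: nat set" by (rule pps)
  have "AE x in ?E i. 0 \<le> x" for i
    by (subst AE_density) (auto simp: exponential_density_def not_less)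
  hence "AE \<sigma> in ?S. 0 \<le> \<sigma> i" for i
    by (intro P.AE_component) auto
  hence "AE \<sigma> in ?S. \<forall>i. 0 \<le> \<sigma> i" by (simp add: AE_all_countable)
  moreover have "{\<sigma>\<in>space ?S. \<exists>i. \<sigma> i < 0} \<in> sets ?S" by measurable
  ultimately show ?thesis
    by (subst (asm) AE_iff_measurable[where N="{\<sigma>\<in>space ?S. \<exists>i. \<sigma> i < 0}"]) (auto simp: not_le)
qed

lemma model_snd:
  assumes "A \<in> sets (\<Pi>\<^sub>M k\<in>(UNIV::nat set). density lborel (exponential_density 1))"
  shows "measure model_space {\<omega>\<in>space model_space. snd \<omega> \<in> A}
       = measure (\<Pi>\<^sub>M k\<in>(UNIV::nat set). density lborel (exponential_density 1)) A"
proof -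
  let ?E = "\<lambda>k::nat. density lborel (exponential_density 1)"
  let ?S = "\<Pi>\<^sub>M k\<in>(UNIV::nat set). ?E k"
  let ?B = "\<Pi>\<^sub>M n\<in>(UNIV::nat set). measure_pmf (bernoulli_pmf (1/2))"
  interpret P: product_prob_space ?E "UNIV :: nat set" by (rule pps)
  interpret Bp: prob_space ?B by (rule prob_space_PiM) (simp add: prob_space_measure_pmf)
  have eq: "{\<omega>\<in>space model_space. snd \<omega> \<in> A} = space ?B \<times> A"
    using sets.sets_into_space[OF assms] unfolding model_space_def
    by (auto simp: space_pair_measure)
  have "emeasure model_space (space ?B \<times> A) = emeasure ?B (space ?B) * emeasure ?S A"
    unfolding model_space_def by (rule P.emeasure_pair_measure_Times) (use assms in auto)
  hence "emeasure model_space (space ?B \<times> A) = emeasure ?S A"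
    by (simp add: Bp.emeasure_space_1)
  thus ?thesis unfolding eq measure_def by simp
qed

lemma path_zero:
  assumes N: "N > 0" and mu: "\<mu> \<ge> 0" and nn: "\<And>i. snd \<omega> i \<ge> 0"
    and J: "real N * T < jump_time \<omega> m" and b: "\<mu> * (1 + 1 / real N) ^ m \<le> real N"
    and t: "t \<in> {0..T}"
  shows "integral {0..t} (\<lambda>s. Yp \<tau> \<mu> N \<omega> s * Ztilde \<tau> \<mu> N \<omega> s) = 0"
proof -
  have "Ztilde \<tau> \<mu> N \<omega> s = 0" if s: "s \<in> {0..t}" for s
  proof -
    let ?n = "THE n. jump_time \<omega> n \<le> real N * s \<and> real N * s < jump_time \<omega> (Suc n)"
    have ns: "0 \<le> real N * s" "real N * s < jump_time \<omega> m"
    proof -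
      show "0 \<le> real N * s" using s by simp
      have "real N * s \<le> real N * T" using s t by (intro mult_left_mono) auto
      thus "real N * s < jump_time \<omega> m" using J by linarith
    qed
    have nm: "?n < m" by (rule jt_the[OF nn ns])
    have "Zp \<tau> \<mu> N \<omega> s = xi \<tau> \<mu> N \<omega> ?n (- int (Lag \<tau> N)) / real N"
      by (simp add: Zp_def Xc_def)
    also have "\<dots> \<le> \<mu> * real N * (1 + 1 / real N) ^ ?n / real N"
      using xi_bound[OF mu N] by (intro divide_right_mono) auto
    also have "\<dots> = \<mu> * (1 + 1 / real N) ^ ?n" using N by simp
    also have "\<dots> \<le> \<mu> * (1 + 1 / real N) ^ m"
      using nm mu by (intro mult_left_mono power_increasing) auto
    finally have "Zp \<tau> \<mu> N \<omega> s \<le> real N" using b by linarith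
    thus ?thesis by (simp add: Ztilde_def)
  qed
  hence "integral {0..t} (\<lambda>s. Yp \<tau> \<mu> N \<omega> s * Ztilde \<tau> \<mu> N \<omega> s) = integral {0..t} (\<lambda>s. 0::real)"
    by (intro integral_cong) simp
  thus ?thesis by simp
qed



lemma model_set_meas:
  assumes "A \<in> sets (\<Pi>\<^sub>M k\<in>(UNIV::nat set). density lborel (exponential_density 1))"
  shows "{\<omega>\<in>space model_space. snd \<omega> \<in> A} \<in> sets model_space"
proof -
  have "snd -` A \<inter> space model_space \<in> sets model_space"
    unfolding model_space_def by (rule measurable_sets[OF measurable_snd assms])
  moreover have "snd -` A \<inter> space model_space = {\<omega>\<in>space model_space. snd \<omega> \<in> A}" by auto
  ultimately show ?thesis by simp
qed

lemma one_plus_pow: "N > 0 \<Longrightarrow> (1 + 1 / real N) ^ (k * N) \<le> exp (real k)"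
proof -
  assume N: "N > 0"
  have "(1 + 1 / real N) ^ N \<le> exp (1 / real N) ^ N"
    by (intro power_mono) (use exp_ge_add_one_self[of "1/real N"] in auto)
  also have "\<dots> = exp 1" using N by (simp add: exp_of_nat_mult[symmetric])
  finally have "((1 + 1 / real N) ^ N) ^ k \<le> exp 1 ^ k"
    by (intro power_mono) auto
  thus ?thesis by (simp add: power_mult[symmetric] mult.commute exp_of_nat_mult[symmetric])
qed

theorem proposition3p7:
  fixes \<tau> \<mu> T :: real
  assumes "\<tau> > 0" and "\<mu> \<ge> 0" and "T > 0"
  shows "\<forall>\<epsilon>>0. (\<lambda>N. measure model_space
           {\<omega> \<in> space model_space.
              (SUP t\<in>{0..T}. \<bar>integral {0..t} (\<lambda>s. Yp \<tau> \<mu> N \<omega> s * Ztilde \<tau> \<mu> N \<omega> s)\<bar>) > \<epsilon>})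
         \<longlonglongrightarrow> 0"
proof (intro allI impI)
  fix \<epsilon> :: real assume "\<epsilon> > 0"
  let ?E = "\<lambda>k::nat. density lborel (exponential_density 1)"
  let ?S = "\<Pi>\<^sub>M k\<in>(UNIV::nat set). ?E k"
  interpret P: product_prob_space ?E "UNIV :: nat set" by (rule pps)
  interpret MS: prob_space model_space unfolding model_space_def
    by (intro prob_space_pair prob_space_PiM) (auto simp: prob_space_measure_pmf pps prob_space_exponential_density)
  obtain k :: nat where k: "exp T < 2 ^ k" using real_arch_pow[of 2 "exp T"] by auto
  define q where "q = exp T / 2 ^ k"
  have q: "0 \<le> q" "q < 1" using k by (auto simp: q_def)
  define N0 where "N0 = nat \<lceil>max 1 (\<mu> * exp (real k))\<rceil>"
  let ?A = "\<lambda>N. {\<omega> \<in> space model_space.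
              (SUP t\<in>{0..T}. \<bar>integral {0..t} (\<lambda>s. Yp \<tau> \<mu> N \<omega> s * Ztilde \<tau> \<mu> N \<omega> s)\<bar>) > \<epsilon>}"
  have bound: "measure model_space (?A N) \<le> q ^ N" if N: "N \<ge> N0" for N
  proof -
    have N1: "N > 0" "\<mu> * exp (real k) \<le> real N" using N unfolding N0_def by linarith+
    define m where "m = k * N"
    have b: "\<mu> * (1 + 1 / real N) ^ m \<le> real N"
      using one_plus_pow[OF N1(1), of k] assms(2) N1(2) unfolding m_def
      by (meson mult_left_mono order_trans)
    define A1 where "A1 = {\<sigma>\<in>space ?S. (\<Sum>i<m. \<sigma> i) \<le> real N * T}"
    define A2 where "A2 = {\<sigma>\<in>space ?S. \<exists>i. \<sigma> i < 0}"
    have A1m: "A1 \<in> sets ?S" unfolding A1_def by measurable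
    have A2m: "A2 \<in> sets ?S" unfolding A2_def by measurable
    have sub: "?A N \<subseteq> {\<omega>\<in>space model_space. snd \<omega> \<in> A1 \<union> A2}"
    proof
      fix \<omega> assume w: "\<omega> \<in> ?A N"
      have sp: "snd \<omega> \<in> space ?S" using w unfolding model_space_def by (auto simp: space_pair_measure)
      show "\<omega> \<in> {\<omega>\<in>space model_space. snd \<omega> \<in> A1 \<union> A2}"
      proof (rule ccontr)
        assume "\<omega> \<notin> {\<omega>\<in>space model_space. snd \<omega> \<in> A1 \<union> A2}"
        hence nn: "\<And>i. snd \<omega> i \<ge> 0" and J: "real N * T < jump_time \<omega> m"
          using w sp by (auto simp: A1_def A2_def jump_time_def not_le not_less)
        have "(SUP t\<in>{0..T}. \<bar>integral {0..t} (\<lambda>s. Yp \<tau> \<mu> N \<omega> s * Ztilde \<tau> \<mu> N \<omega> s)\<bar>)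
              = (SUP t\<in>{0..T}. (0::real))"
          using path_zero[OF N1(1) assms(2) nn J b] by (intro SUP_cong) auto
        also have "\<dots> = 0" using assms(3) by simp
        finally show False using w \<open>\<epsilon> > 0\<close> by simp
      qed
    qed
    have "measure model_space (?A N) \<le> measure model_space {\<omega>\<in>space model_space. snd \<omega> \<in> A1 \<union> A2}"
      by (rule MS.finite_measure_mono[OF sub]) (use A1m A2m in \<open>intro model_set_meas sets.Un\<close>)
    also have "\<dots> = measure ?S (A1 \<union> A2)" using A1m A2m by (intro model_snd) auto
    finally have c1: "measure model_space (?A N) \<le> measure ?S (A1 \<union> A2)" .
    have c2: "measure ?S (A1 \<union> A2) \<le> measure ?S A1 + measure ?S A2" using A1m A2m by (rule measure_Un_le)
    have c3: "measure ?S A2 = 0" using neg_null unfolding A2_def measure_def by simp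
    have c4: "measure ?S A1 \<le> exp (real N * T) * (1/2) ^ m"
      using chernoff[of m "real N * T"] unfolding A1_def measure_def
      by (simp add: enn2real_leI)
    have c5: "exp (real N * T) * (1/2) ^ m = q ^ N"
    proof -
      have e1: "exp (real N * T) * (1/2) ^ (k * N) = (exp T * (1/2) ^ k) ^ N"
        by (simp only: exp_of_nat_mult power_mult power_mult_distrib)
      have "(1/2::real) ^ k = 1 / 2 ^ k" by (simp only: power_divide power_one)
      hence e2: "exp T * (1/2) ^ k = q" unfolding q_def by (metis times_divide_eq_right mult_1_right)
      show ?thesis unfolding m_def e1 e2 by (rule refl)
    qed
    show ?thesis using c1 c2 c3 c4 c5 by linarith
  qed
  have l: "(\<lambda>N. q ^ N) \<longlonglongrightarrow> 0" by (rule LIMSEQ_power_zero) (use q in simp)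
  have ev: "eventually (\<lambda>N. measure model_space (?A N) \<le> q ^ N) sequentially"
    unfolding eventually_sequentially using bound by blast
  have ev0: "eventually (\<lambda>N. 0 \<le> measure model_space (?A N)) sequentially"
    by (rule always_eventually) (simp add: measure_nonneg)
  show "(\<lambda>N. measure model_space (?A N)) \<longlonglongrightarrow> 0"
    by (rule tendsto_sandwich[OF ev0 ev tendsto_const l])
qed

end
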